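(* Let $\mathscr{A}\in\mathbb{R}^{n\times n\times n_3}$, $\mathscr{V}\in\mathbb{R}^{n\times s\times n_3}$, and suppose $m$ steps of the tensor tubal-global Arnoldi process described in the context have been run (without breakdown). Then the tensors $\mathscr{V}_1,\dots,\mathscr{V}_m$ form a T-orthonormal basis of the tubal-global Krylov subspace $\mathscr{TK}^g_m(\mathscr{A},\mathscr{V})$.
   Context: All tensors are real third-order arrays. $\widehat{\mathscr{A}}=\mathscr{A}\times_3F_{n_3}$ denotes the tensor obtained by applying the discrete Fourier transform ($F_{n_3}$ with entries $\omega^{(i-1)(j-1)}$, $\omega=e^{-2\pi\mathrm{i}/n_3}$) to each tube; its frontal slices $\hat A^{(k)}$ are the Fourier slices. T-product: $\mathscr{A}\star\mathscr{B}$ has Fourier slices $\hat A^{(k)}\hat B^{(k)}$; $\mathscr{A}^0$ is the identity tensor (first frontal slice $I_n$, others zero) and $\mathscr{A}^{i}=\mathscr{A}\star\mathscr{A}^{i-1}$. Transpose $\mathscr{A}^T$: transpose each frontal slice and reverse the order of frontal slices $2,\dots,n_3$. A tube is an element of $\mathbb{R}^{1\times1\times n_3}$; $\mathbf{e}$ is the tube with entries $(1,0,\dots,0)$ and $\mathbf{o}$ the zero tube. For a tube $\mathbf{a}$, $\mathbf{a}\divideontimes\mathscr{B}$ is the tensor whose $(i,j)$ tube is $\mathbf{a}\star\mathscr{B}(i,j,:)$. T-trace: the tube whose $k$-th Fourier slice is the trace of the $k$-th Fourier slice. Tubal inner product: $\langle\mathscr{X},\mathscr{Y}\rangle_T=\text{T-trace}(\mathscr{X}^T\star\mathscr{Y})$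 for $\mathscr{X},\mathscr{Y}\in\mathbb{R}^{n\times s\times n_3}$. A family $\mathscr{V}_1,\dots,\mathscr{V}_m$ is T-orthonormal if $\langle\mathscr{V}_i,\mathscr{V}_j\rangle_T=\mathbf{e}$ for $i=j$ and $\mathbf{o}$ for $i\ne j$. Tubal-global Krylov subspace: $\mathscr{TK}^g_m(\mathscr{A},\mathscr{V})=\{\sum_{i=1}^m\mathbf{a}_i\divideontimes(\mathscr{A}^{i-1}\star\mathscr{V}):\ \mathbf{a}_i\in\mathbb{R}^{1\times1\times n_3}\}$. Normalization of $\mathscr{W}$: $\mathbf{a}$ is the tube whose $k$-th Fourier coefficient is $\|\hat W^{(k)}\|_F$ (breakdown if one is zero), and $\mathscr{Q}$ has Fourier slices $\hat W^{(k)}/\|\hat W^{(k)}\|_F$; output $[\mathscr{Q},\mathbf{a}]$. Tubal-global Arnoldi process: $[\mathscr{V}_1,\mathbf{r}_{1,1}]=\mathrm{Normalization}(\mathscr{V})$; for $j=1,\dots,m$: $\mathscr{W}=\mathscr{A}\star\mathscr{V}_j$; for $i=1,\dots,j$: $\mathbf{h}_{i,j}=\langle\mathscr{V}_i,\mathscr{W}\rangle_T$, $\mathscr{W}\leftarrow\mathscr{W}-\mathbf{h}_{i,j}\divideontimes\mathscr{V}_i$; then $[\mathscr{V}_{j+1},\mathbf{h}_{j+1,j}]=\mathrm{Normalization}(\mathscr{W})$. *)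

theory Defs
  imports Complex_Main "HOL-Library.Function_Algebras"
begin

text \<open>A third-order real tensor of size n1 x n2 x n3 is represented as a
function X :: nat => nat => nat => real (0-based indices i j t), which is zero outside
the box i < n1, j < n2, t < n3. A tube is a function nat => real, zero for t >= n3.\<close>

type_synonym tensor = "nat \<Rightarrow> nat \<Rightarrow> nat \<Rightarrow> real"
type_synonym tube = "nat \<Rightarrow> real"

definition is_tensor :: "nat \<Rightarrow> nat \<Rightarrow> nat \<Rightarrow> tensor \<Rightarrow> bool" where
  "is_tensor n1 n2 n3 X \<longleftrightarrow> (\<forall>i j t. \<not> (i < n1 \<and> j < n2 \<and> t < n3) \<longrightarrow> X i j t = 0)"

definition is_tube :: "nat \<Rightarrow> tube \<Rightarrow> bool" where
  "is_tube n3 a \<longleftrightarrow> (\<forall>t. n3 \<le> t \<longrightarrow> a t = 0)"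

definition omega :: "nat \<Rightarrow> complex" where
  "omega n3 = cis (- 2 * pi / real n3)"

definition tfft :: "nat \<Rightarrow> tensor \<Rightarrow> nat \<Rightarrow> nat \<Rightarrow> nat \<Rightarrow> complex" where
  "tfft n3 X i j k = (\<Sum>t<n3. complex_of_real (X i j t) * omega n3 ^ (t * k))"

definition tube_fft :: "nat \<Rightarrow> tube \<Rightarrow> nat \<Rightarrow> complex" where
  "tube_fft n3 a k = (\<Sum>t<n3. complex_of_real (a t) * omega n3 ^ (t * k))"

text \<open>Inverse transform of prescribed Fourier slices (real part taken, the result being a
real tensor); truncated to t < n3.\<close>
definition tifft :: "nat \<Rightarrow> (nat \<Rightarrow> nat \<Rightarrow> nat \<Rightarrow> complex) \<Rightarrow> tensor" where
  "tifft n3 Y i j t = (if t < n3 then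
      Re ((\<Sum>k<n3. Y i j k * cnj (omega n3) ^ (t * k)) / of_nat n3) else 0)"

definition tube_ifft :: "nat \<Rightarrow> (nat \<Rightarrow> complex) \<Rightarrow> tube" where
  "tube_ifft n3 y t = (if t < n3 then
      Re ((\<Sum>k<n3. y k * cnj (omega n3) ^ (t * k)) / of_nat n3) else 0)"

definition tprod :: "nat \<Rightarrow> nat \<Rightarrow> tensor \<Rightarrow> tensor \<Rightarrow> tensor" where
  "tprod p n3 A B = tifft n3 (\<lambda>i j k. \<Sum>l<p. tfft n3 A i l k * tfft n3 B l j k)"

definition tident :: "nat \<Rightarrow> tensor" where
  "tident n i j t = (if i = j \<and> i < n \<and> t = 0 then 1 else 0)"

primrec tpow :: "nat \<Rightarrow> nat \<Rightarrow> tensor \<Rightarrow> nat \<Rightarrow> tensor" where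
  "tpow n n3 A 0 = tident n"
| "tpow n n3 A (Suc k) = tprod n n3 A (tpow n n3 A k)"

text \<open>Transpose: transpose each frontal slice, reverse the order of slices 2..n3.\<close>
definition ttrans :: "nat \<Rightarrow> tensor \<Rightarrow> tensor" where
  "ttrans n3 X i j t = (if t < n3 then X j i ((n3 - t) mod n3) else 0)"

definition tube_e :: tube where "tube_e t = (if t = 0 then 1 else 0)"
definition tube_o :: tube where "tube_o t = 0"

definition tube_mult :: "nat \<Rightarrow> tube \<Rightarrow> tensor \<Rightarrow> tensor" where
  "tube_mult n3 a B = tifft n3 (\<lambda>i j k. tube_fft n3 a k * tfft n3 B i j k)"

definition ttrace :: "nat \<Rightarrow> nat \<Rightarrow> tensor \<Rightarrow> tube" where
  "ttrace s n3 Z = tube_ifft n3 (\<lambda>k. \<Sum>i<s. tfft n3 Z i i k)"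

definition tinner :: "nat \<Rightarrow> nat \<Rightarrow> nat \<Rightarrow> tensor \<Rightarrow> tensor \<Rightarrow> tube" where
  "tinner n s n3 X Y = ttrace s n3 (tprod n n3 (ttrans n3 X) Y)"

definition fslice_norm :: "nat \<Rightarrow> nat \<Rightarrow> nat \<Rightarrow> tensor \<Rightarrow> nat \<Rightarrow> real" where
  "fslice_norm n s n3 W k = sqrt (\<Sum>i<n. \<Sum>j<s. (cmod (tfft n3 W i j k))\<^sup>2)"

definition normalization :: "nat \<Rightarrow> nat \<Rightarrow> nat \<Rightarrow> tensor \<Rightarrow> tensor \<times> tube" where
  "normalization n s n3 W =
     (tifft n3 (\<lambda>i j k. tfft n3 W i j k / complex_of_real (fslice_norm n s n3 W k)),
      tube_ifft n3 (\<lambda>k. complex_of_real (fslice_norm n s n3 W k)))"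

definition breakdown :: "nat \<Rightarrow> nat \<Rightarrow> nat \<Rightarrow> tensor \<Rightarrow> bool" where
  "breakdown n s n3 W \<longleftrightarrow> (\<exists>k<n3. fslice_norm n s n3 W k = 0)"

primrec mgs :: "nat \<Rightarrow> nat \<Rightarrow> nat \<Rightarrow> (nat \<Rightarrow> tensor) \<Rightarrow> tensor \<Rightarrow> nat \<Rightarrow> tensor" where
  "mgs n s n3 Vs W 0 = W"
| "mgs n s n3 Vs W (Suc i) =
     (let W' = mgs n s n3 Vs W i
      in W' - tube_mult n3 (tinner n s n3 (Vs (Suc i)) W') (Vs (Suc i)))"

definition arnoldi_W :: "nat \<Rightarrow> nat \<Rightarrow> nat \<Rightarrow> tensor \<Rightarrow> tensor list \<Rightarrow> tensor" where
  "arnoldi_W n s n3 A Vs =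
     mgs n s n3 (\<lambda>i. Vs ! (i - 1)) (tprod n n3 A (last Vs)) (length Vs)"

text \<open>arnoldi n s n3 A V j = [V_1, ..., V_(j+1)], produced by j steps of the process.\<close>
primrec arnoldi :: "nat \<Rightarrow> nat \<Rightarrow> nat \<Rightarrow> tensor \<Rightarrow> tensor \<Rightarrow> nat \<Rightarrow> tensor list" where
  "arnoldi n s n3 A V 0 = [fst (normalization n s n3 V)]"
| "arnoldi n s n3 A V (Suc j) =
     (let Vs = arnoldi n s n3 A V j
      in Vs @ [fst (normalization n s n3 (arnoldi_W n s n3 A Vs))])"

text \<open>V_j (for j >= 1).\<close>
definition arnoldi_V :: "nat \<Rightarrow> nat \<Rightarrow> nat \<Rightarrow> tensor \<Rightarrow> tensor \<Rightarrow> nat \<Rightarrow> tensor" where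
  "arnoldi_V n s n3 A V j = last (arnoldi n s n3 A V (j - 1))"

definition no_breakdown :: "nat \<Rightarrow> nat \<Rightarrow> nat \<Rightarrow> tensor \<Rightarrow> tensor \<Rightarrow> nat \<Rightarrow> bool" where
  "no_breakdown n s n3 A V m \<longleftrightarrow>
     \<not> breakdown n s n3 V \<and>
     (\<forall>j<m. \<not> breakdown n s n3 (arnoldi_W n s n3 A (arnoldi n s n3 A V j)))"

definition tgKrylov :: "nat \<Rightarrow> nat \<Rightarrow> nat \<Rightarrow> nat \<Rightarrow> tensor \<Rightarrow> tensor \<Rightarrow> tensor set" where
  "tgKrylov n s n3 m A V =
     {X. \<exists>a. (\<forall>i. is_tube n3 (a i)) \<and>
          X = (\<Sum>i=1..m. tube_mult n3 (a i) (tprod n n3 (tpow n n3 A (i - 1)) V))}"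

definition tspan :: "nat \<Rightarrow> nat \<Rightarrow> (nat \<Rightarrow> tensor) \<Rightarrow> tensor set" where
  "tspan n3 m Vs = {X. \<exists>b. (\<forall>j. is_tube n3 (b j)) \<and> X = (\<Sum>j=1..m. tube_mult n3 (b j) (Vs j))}"

definition T_orthonormal :: "nat \<Rightarrow> nat \<Rightarrow> nat \<Rightarrow> nat \<Rightarrow> (nat \<Rightarrow> tensor) \<Rightarrow> bool" where
  "T_orthonormal n s n3 m Vs \<longleftrightarrow>
     (\<forall>i\<in>{1..m}. \<forall>j\<in>{1..m}.
        tinner n s n3 (Vs i) (Vs j) = (if i = j then tube_e else tube_o))"

definition T_independent :: "nat \<Rightarrow> nat \<Rightarrow> (nat \<Rightarrow> tensor) \<Rightarrow> bool" where
  "T_independent n3 m Vs \<longleftrightarrow>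
     (\<forall>b. (\<forall>j. is_tube n3 (b j)) \<longrightarrow> (\<Sum>j=1..m. tube_mult n3 (b j) (Vs j)) = 0 \<longrightarrow>
        (\<forall>j\<in>{1..m}. b j = tube_o))"

definition T_orthonormal_basis :: "nat \<Rightarrow> nat \<Rightarrow> nat \<Rightarrow> nat \<Rightarrow> (nat \<Rightarrow> tensor) \<Rightarrow> tensor set \<Rightarrow> bool" where
  "T_orthonormal_basis n s n3 m Vs S \<longleftrightarrow>
     T_orthonormal n s n3 m Vs \<and> T_independent n3 m Vs \<and> (\<forall>j\<in>{1..m}. Vs j \<in> S) \<and>
     tspan n3 m Vs = S"

end

theory Submission
  imports Defs
begin


lemma omega_pow: "omega n3 ^ x = cis (- 2 * pi * real x / real n3)"
  unfolding omega_def DeMoivre by (simp add: field_simps)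

lemma omega_n3: "0 < n3 \<Longrightarrow> omega n3 ^ n3 = 1"
  unfolding omega_pow by (simp add: cis_cnj[symmetric])

lemma norm_omega_pow: "cmod (omega n3 ^ x) = 1"
  unfolding omega_pow by simp

lemma omega_rev:
  assumes "0 < n3" "k < n3"
  shows "omega n3 ^ (t * ((n3 - k) mod n3)) = cnj (omega n3 ^ (t * k))"
proof (cases "k = 0")
  case True thus ?thesis by simp
next
  case False
  hence e: "(n3 - k) mod n3 = n3 - k" using assms by simp
  have "omega n3 ^ (t * (n3 - k)) * omega n3 ^ (t * k) = omega n3 ^ (t * n3)"
    using assms by (simp add: power_add[symmetric] diff_mult_distrib2 )
  also have "\<dots> = 1" using omega_n3[OF assms(1)] by (simp add: power_mult mult.commute[of t])
  finally have 1: "omega n3 ^ (t * (n3 - k)) * omega n3 ^ (t * k) = 1" .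
  have 2: "cnj (omega n3 ^ (t * k)) * omega n3 ^ (t * k) = 1"
    using complex_norm_square[of "omega n3 ^ (t * k)"] norm_omega_pow[of n3 "t*k"]
    by (simp add: mult.commute)
  have "omega n3 ^ (t * k) \<noteq> 0" using norm_omega_pow[of n3 "t*k"] by (metis norm_zero zero_neq_one)
  with 1 2 show ?thesis unfolding e by (metis mult_right_cancel)
qed

lemma omega_orth:
  assumes "0 < n3" "u < n3" "v < n3"
  shows "(\<Sum>t<n3. omega n3 ^ (t * u) * cnj (omega n3) ^ (t * v)) = (if u = v then of_nat n3 else 0)"
proof -
  define z where "z = omega n3 ^ u * cnj (omega n3) ^ v"
  have eq: "omega n3 ^ (t * u) * cnj (omega n3) ^ (t * v) = z ^ t" for t
    by (simp add: z_def power_mult_distrib power_mult mult.commute[of t])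
  have zc: "z = cis (2 * pi * (real v - real u) / real n3)"
    unfolding z_def omega_pow complex_cnj_power[symmetric] cis_cnj cis_mult
    by (simp add: field_simps diff_divide_distrib)
  show ?thesis
  proof (cases "u = v")
    case True
    hence "z = 1" unfolding zc by simp
    have "(\<Sum>t<n3. omega n3 ^ (t * u) * cnj (omega n3) ^ (t * v)) = (\<Sum>t<n3. z ^ t)"
      by (simp only: eq)
    thus ?thesis using True \<open>z = 1\<close> by simp
  next
    case False
    have zn: "z ^ n3 = 1"
    proof -
      have "z ^ n3 = cis (2 * pi * (real v - real u))" unfolding zc DeMoivre using assms by simp
      also have "\<dots> = cis (2 * pi * real_of_int (int v - int u))" by simp
      also have "\<dots> = 1" by (rule cis_multiple_2pi) simp
      finally show ?thesis .
    qed
    have "z \<noteq> 1"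
    proof
      assume "z = 1"
      hence "cos (2 * pi * (real v - real u) / real n3) = 1" unfolding zc by (simp add: complex_eq_iff)
      then obtain m :: int where m: "2 * pi * (real v - real u) / real n3 = real_of_int m * 2 * pi"
        by (subst (asm) cos_one_2pi_int) blast
      hence "real_of_int (int v - int u) = real_of_int (m * int n3)"
        unfolding of_int_diff of_int_mult using assms by (simp add: nonzero_divide_eq_eq)
      hence *: "int v - int u = m * int n3" by (simp only: of_int_eq_iff)
      hence "abs m * n3 = abs (int v - int u)" by (simp add: abs_mult)
      also have "\<dots> < int n3" using assms by linarith
      finally have "m = 0" using assms by (simp add: mult_less_cancel_right2)
      with * False show False by simp
    qed
    thus ?thesis using False zn by (simp add: eq geometric_sum)
  qed
qed


definition symc :: "nat \<Rightarrow> (nat \<Rightarrow> complex) \<Rightarrow> bool" where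
  "symc n3 f \<longleftrightarrow> (\<forall>k<n3. f ((n3 - k) mod n3) = cnj (f k))"

lemma sum_rev:
  assumes "0 < (n3::nat)"
  shows "(\<Sum>k<n3. g ((n3 - k) mod n3)) = (\<Sum>k<n3. g k)"
  by (rule sum.reindex_bij_witness[where i="\<lambda>k. (n3 - k) mod n3" and j="\<lambda>k. (n3 - k) mod n3"])
     (use assms in \<open>auto simp: mod_if\<close>)

lemma tube_fft_sym:
  assumes "0 < n3" "k < n3"
  shows "tube_fft n3 a ((n3 - k) mod n3) = cnj (tube_fft n3 a k)"
  unfolding tube_fft_def cnj_sum using omega_rev[OF assms] by simp

lemma symc_tube_fft: "0 < n3 \<Longrightarrow> symc n3 (tube_fft n3 a)"
  unfolding symc_def using tube_fft_sym by blast

lemma tube_fft_ifft: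
  assumes n: "0 < n3" and y: "symc n3 y" and k0: "k0 < n3"
  shows "tube_fft n3 (tube_ifft n3 y) k0 = y k0"
proof -
  define z where "z t = (\<Sum>k<n3. y k * cnj (omega n3) ^ (t * k)) / of_nat n3" for t
  have real: "cnj (z t) = z t" for t
  proof -
    have "cnj (z t) = (\<Sum>k<n3. cnj (y k) * omega n3 ^ (t * k)) / of_nat n3"
      unfolding z_def cnj_sum by (simp add: complex_cnj_power)
    also have "(\<Sum>k<n3. cnj (y k) * omega n3 ^ (t * k))
        = (\<Sum>k<n3. (\<lambda>k. y k * cnj (omega n3) ^ (t * k)) ((n3 - k) mod n3))"
    proof (rule sum.cong[OF refl])
      fix k assume "k \<in> {..<n3}"
      hence kk: "k < n3" by simp
      have 1: "cnj (y k) = y ((n3 - k) mod n3)" using y kk unfolding symc_def by simp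
      have 2: "omega n3 ^ (t * k) = cnj (omega n3) ^ (t * ((n3 - k) mod n3))"
        using arg_cong[OF omega_rev[OF n kk, of t], of cnj] by simp
      show "cnj (y k) * omega n3 ^ (t * k) =
        (\<lambda>k. y k * cnj (omega n3) ^ (t * k)) ((n3 - k) mod n3)" unfolding 1 2 by (rule refl)
    qed
    also have "\<dots> = (\<Sum>k<n3. y k * cnj (omega n3) ^ (t * k))" by (rule sum_rev[OF n])
    finally show ?thesis unfolding z_def by simp
  qed
  have re: "complex_of_real (Re (z t)) = z t" for t
    using real[of t] by (simp add: Reals_cnj_iff[symmetric])
  have "tube_fft n3 (tube_ifft n3 y) k0 = (\<Sum>t<n3. z t * omega n3 ^ (t * k0))"
    unfolding tube_fft_def tube_ifft_def z_def[symmetric] using re by simp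
  also have "\<dots> = (\<Sum>t<n3. \<Sum>k<n3. y k * (omega n3 ^ (t * k0) * cnj (omega n3) ^ (t * k)) / of_nat n3)"
    by (rule sum.cong[OF refl]) (simp add: z_def sum_divide_distrib sum_distrib_left mult_ac)
  also have "\<dots> = (\<Sum>k<n3. y k * (\<Sum>t<n3. omega n3 ^ (t * k0) * cnj (omega n3) ^ (t * k)) / of_nat n3)"
    unfolding sum_distrib_left sum_divide_distrib by (rule sum.swap)
  also have "\<dots> = (\<Sum>k<n3. if k = k0 then y k0 else 0)"
    by (rule sum.cong[OF refl]) (use n k0 in \<open>auto simp: omega_orth\<close>)
  also have "\<dots> = y k0" using k0 by simp
  finally show ?thesis .
qed


lemma tube_ifft_fft:
  assumes n: "0 < n3" and a: "is_tube n3 a"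
  shows "tube_ifft n3 (tube_fft n3 a) = a"
proof
  fix t
  show "tube_ifft n3 (tube_fft n3 a) t = a t"
  proof (cases "t < n3")
    case False thus ?thesis using a unfolding is_tube_def tube_ifft_def by simp
  next
    case True
    have "(\<Sum>k<n3. tube_fft n3 a k * cnj (omega n3) ^ (t * k))
        = (\<Sum>k<n3. \<Sum>u<n3. complex_of_real (a u) * (omega n3 ^ (k * u) * cnj (omega n3) ^ (k * t)))"
      unfolding tube_fft_def by (rule sum.cong[OF refl]) (simp add: sum_distrib_left sum_distrib_right mult_ac)
    also have "\<dots> = (\<Sum>u<n3. complex_of_real (a u) * (\<Sum>k<n3. omega n3 ^ (k * u) * cnj (omega n3) ^ (k * t)))"
      unfolding sum_distrib_left by (rule sum.swap)
    also have "\<dots> = (\<Sum>u<n3. if u = t then complex_of_real (a t) * of_nat n3 else 0)"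
      by (rule sum.cong[OF refl]) (use n True in \<open>auto simp: omega_orth\<close>)
    also have "\<dots> = complex_of_real (a t) * of_nat n3" using True by simp
    finally show ?thesis unfolding tube_ifft_def using True n by simp
  qed
qed

lemma tube_ifft_cong: "(\<And>k. k < n3 \<Longrightarrow> y k = y' k) \<Longrightarrow> tube_ifft n3 y = tube_ifft n3 y'"
  unfolding tube_ifft_def by (intro ext) simp

lemma is_tube_ifft: "is_tube n3 (tube_ifft n3 y)"
  unfolding is_tube_def tube_ifft_def by simp



definition trunc3 :: "nat \<Rightarrow> tensor \<Rightarrow> bool" where
  "trunc3 n3 X \<longleftrightarrow> (\<forall>i j t. n3 \<le> t \<longrightarrow> X i j t = 0)"

lemma tfft_tube: "tfft n3 X i j k = tube_fft n3 (X i j) k"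
  unfolding tfft_def tube_fft_def ..

lemma tifft_tube: "tifft n3 Y i j = tube_ifft n3 (Y i j)"
  unfolding tifft_def tube_ifft_def by (rule ext) simp

lemma trunc_tifft: "trunc3 n3 (tifft n3 Y)"
  unfolding trunc3_def tifft_def by simp

lemma tfft_tifft:
  "0 < n3 \<Longrightarrow> (\<And>i j. symc n3 (Y i j)) \<Longrightarrow> k < n3 \<Longrightarrow> tfft n3 (tifft n3 Y) i j k = Y i j k"
  unfolding tfft_tube tifft_tube by (rule tube_fft_ifft)

lemma tensor_eq:
  assumes n: "0 < n3" and X: "trunc3 n3 X" and Y: "trunc3 n3 Y"
    and F: "\<And>i j k. k < n3 \<Longrightarrow> tfft n3 X i j k = tfft n3 Y i j k"
  shows "X = Y"
proof (intro ext)
  fix i j t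
  have "X i j = tube_ifft n3 (tube_fft n3 (X i j))"
    using X n by (simp add: tube_ifft_fft is_tube_def trunc3_def)
  also have "\<dots> = tube_ifft n3 (tube_fft n3 (Y i j))"
    by (rule tube_ifft_cong) (use F in \<open>simp add: tfft_tube\<close>)
  also have "\<dots> = Y i j"
    using Y n by (simp add: tube_ifft_fft is_tube_def trunc3_def)
  finally show "X i j t = Y i j t" by simp
qed

lemma symc_tfft: "0 < n3 \<Longrightarrow> symc n3 (\<lambda>k. tfft n3 X i j k)"
  unfolding tfft_tube using symc_tube_fft by simp

lemma symc_mult: "symc n3 f \<Longrightarrow> symc n3 g \<Longrightarrow> symc n3 (\<lambda>k. f k * g k)"
  unfolding symc_def by simp
lemma symc_add: "symc n3 f \<Longrightarrow> symc n3 g \<Longrightarrow> symc n3 (\<lambda>k. f k + g k)"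
  unfolding symc_def by simp
lemma symc_diff: "symc n3 f \<Longrightarrow> symc n3 g \<Longrightarrow> symc n3 (\<lambda>k. f k - g k)"
  unfolding symc_def by simp
lemma symc_uminus: "symc n3 f \<Longrightarrow> symc n3 (\<lambda>k. - f k)"
  unfolding symc_def by simp
lemma symc_divide: "symc n3 f \<Longrightarrow> symc n3 g \<Longrightarrow> symc n3 (\<lambda>k. f k / g k)"
  unfolding symc_def by simp
lemma symc_cnj: "symc n3 f \<Longrightarrow> symc n3 (\<lambda>k. cnj (f k))"
  unfolding symc_def by simp
lemma symc_const: "symc n3 (\<lambda>k. complex_of_real c)"
  unfolding symc_def by simp
lemma symc_zero: "symc n3 (\<lambda>k. 0)"
  unfolding symc_def by simp
lemma symc_one: "symc n3 (\<lambda>k. 1)"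
  unfolding symc_def by simp
lemma symc_real: "(\<And>k. k < n3 \<Longrightarrow> r ((n3 - k) mod n3) = r k) \<Longrightarrow> symc n3 (\<lambda>k. complex_of_real (r k))"
  unfolding symc_def by simp
lemma symc_sum: "finite I \<Longrightarrow> (\<And>x. x \<in> I \<Longrightarrow> symc n3 (f x)) \<Longrightarrow> symc n3 (\<lambda>k. \<Sum>x\<in>I. f x k)"
  by (induction I rule: finite_induct) (auto simp: symc_def cnj_sum)
lemma symc_if: "symc n3 f \<Longrightarrow> symc n3 g \<Longrightarrow> symc n3 (\<lambda>k. if P then f k else g k)"
  unfolding symc_def by simp

lemma tfft_tprod:
  assumes "0 < n3" "k < n3"
  shows "tfft n3 (tprod p n3 A B) i j k = (\<Sum>l<p. tfft n3 A i l k * tfft n3 B l j k)"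
  unfolding tprod_def
  by (rule tfft_tifft[OF assms(1) _ assms(2)])
     (intro symc_sum symc_mult symc_tfft assms(1) finite_lessThan)

lemma tfft_tube_mult:
  assumes "0 < n3" "k < n3"
  shows "tfft n3 (tube_mult n3 a B) i j k = tube_fft n3 a k * tfft n3 B i j k"
  unfolding tube_mult_def
  by (rule tfft_tifft[OF assms(1) _ assms(2)])
     (intro symc_mult symc_tfft symc_tube_fft assms(1))

lemma tfft_diff: "tfft n3 (X - Y) i j k = tfft n3 X i j k - tfft n3 Y i j k"
  unfolding tfft_def by (simp add: sum_subtractf algebra_simps)

lemma tfft_add: "tfft n3 (X + Y) i j k = tfft n3 X i j k + tfft n3 Y i j k"
  unfolding tfft_def by (simp add: sum.distrib algebra_simps)

lemma tfft_zero: "tfft n3 0 i j k = 0"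
  unfolding tfft_def by simp

lemma sum_fun_apply3: "(\<Sum>x\<in>I. F x) i j t = (\<Sum>x\<in>I. F x i j t)"
  for F :: "'b \<Rightarrow> tensor"
  by (induction I rule: infinite_finite_induct) auto

lemma tfft_sum: "tfft n3 (\<Sum>x\<in>I. F x) i j k = (\<Sum>x\<in>I. tfft n3 (F x) i j k)"
  unfolding tfft_def sum_fun_apply3 by (simp add: sum_distrib_right) (rule sum.swap)

lemma trunc_diff: "trunc3 n3 X \<Longrightarrow> trunc3 n3 Y \<Longrightarrow> trunc3 n3 (X - Y)"
  unfolding trunc3_def by simp

lemma trunc_sum: "(\<And>x. x \<in> I \<Longrightarrow> trunc3 n3 (F x)) \<Longrightarrow> trunc3 n3 (\<Sum>x\<in>I. F x)"
  unfolding trunc3_def sum_fun_apply3 by simp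

lemma tfft_ttrans:
  assumes n: "0 < n3"
  shows "tfft n3 (ttrans n3 X) i j k = cnj (tfft n3 X j i k)"
proof -
  have "tfft n3 (ttrans n3 X) i j k = (\<Sum>t<n3. complex_of_real (X j i ((n3 - t) mod n3)) * omega n3 ^ (t * k))"
    unfolding tfft_def ttrans_def by simp
  also have "\<dots> = (\<Sum>t<n3. (\<lambda>u. complex_of_real (X j i u) * omega n3 ^ (((n3 - u) mod n3) * k)) ((n3 - t) mod n3))"
  proof (rule sum.cong[OF refl])
    fix t assume "t \<in> {..<n3}"
    hence "(n3 - (n3 - t) mod n3) mod n3 = t" using n by (auto simp: mod_if)
    thus "complex_of_real (X j i ((n3 - t) mod n3)) * omega n3 ^ (t * k) =
      (\<lambda>u. complex_of_real (X j i u) * omega n3 ^ (((n3 - u) mod n3) * k)) ((n3 - t) mod n3)" by simp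
  qed
  also have "\<dots> = (\<Sum>u<n3. complex_of_real (X j i u) * omega n3 ^ (((n3 - u) mod n3) * k))"
    by (rule sum_rev[OF n])
  also have "\<dots> = (\<Sum>u<n3. complex_of_real (X j i u) * cnj (omega n3 ^ (u * k)))"
  proof (rule sum.cong[OF refl])
    fix u assume "u \<in> {..<n3}"
    hence u: "u < n3" by simp
    show "complex_of_real (X j i u) * omega n3 ^ (((n3 - u) mod n3) * k) =
        complex_of_real (X j i u) * cnj (omega n3 ^ (u * k))"
      using omega_rev[OF n u, of k] by (simp add: mult.commute)
  qed
  also have "\<dots> = cnj (tfft n3 X j i k)"
    unfolding tfft_def cnj_sum by simp
  finally show ?thesis .
qed

lemma sum_delta0: "0 < (n3::nat) \<Longrightarrow> (\<Sum>t<n3. complex_of_real (if t = 0 then 1 else 0) * f t) = (f 0 :: complex)"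
proof -
  assume n: "0 < n3"
  have "(\<Sum>t<n3. complex_of_real (if t = 0 then 1 else 0) * f t) = (\<Sum>t<n3. if t = 0 then f t else 0)"
    by (rule sum.cong) auto
  also have "\<dots> = f 0" using n by (simp add: sum.delta)
  finally show ?thesis .
qed

lemma mult_cnj_sq: "z * cnj z = (complex_of_real (cmod z))\<^sup>2"
  by (simp add: complex_norm_square[symmetric])

lemma tfft_tident:
  assumes "0 < n3"
  shows "tfft n3 (tident n) i j k = (if i = j \<and> i < n then 1 else 0)"
proof (cases "i = j \<and> i < n")
  case True thus ?thesis using assms by (simp add: tfft_def tident_def sum_delta0)
next
  case False
  hence e: "\<And>t. (i = j \<and> i < n \<and> t = 0) = False" by blast
  show ?thesis unfolding tfft_def tident_def e using False by simp
qed

definition ipF :: "nat \<Rightarrow> nat \<Rightarrow> (nat \<Rightarrow> nat \<Rightarrow> nat \<Rightarrow> complex) \<Rightarrow> (nat \<Rightarrow> nat \<Rightarrow> nat \<Rightarrow> complex) \<Rightarrow> nat \<Rightarrow> complex" where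
  "ipF n s Xh Yh k = (\<Sum>l<n. \<Sum>i<s. cnj (Xh l i k) * Yh l i k)"

lemma tube_fft_tinner:
  assumes n: "0 < n3" and k: "k < n3"
  shows "tube_fft n3 (tinner n s n3 X Y) k = ipF n s (tfft n3 X) (tfft n3 Y) k"
proof -
  have "tube_fft n3 (tinner n s n3 X Y) k = (\<Sum>i<s. tfft n3 (tprod n n3 (ttrans n3 X) Y) i i k)"
    unfolding tinner_def ttrace_def
    by (rule tube_fft_ifft[OF n _ k]) (intro symc_sum symc_tfft n finite_lessThan)
  also have "\<dots> = (\<Sum>i<s. \<Sum>l<n. cnj (tfft n3 X l i k) * tfft n3 Y l i k)"
    by (simp add: tfft_tprod[OF n k] tfft_ttrans[OF n])
  also have "\<dots> = ipF n s (tfft n3 X) (tfft n3 Y) k"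
    unfolding ipF_def by (rule sum.swap)
  finally show ?thesis .
qed

lemma tube_fft_e: "0 < n3 \<Longrightarrow> tube_fft n3 tube_e k = 1"
  unfolding tube_fft_def tube_e_def by (simp add: sum_delta0)

lemma fslice_norm_sym:
  assumes "0 < n3" "k < n3"
  shows "fslice_norm n s n3 W ((n3 - k) mod n3) = fslice_norm n s n3 W k"
  unfolding fslice_norm_def tfft_tube tube_fft_sym[OF assms] by simp

lemma tfft_normalization:
  assumes n: "0 < n3" and k: "k < n3"
  shows "tfft n3 (fst (normalization n s n3 W)) i j k = tfft n3 W i j k / complex_of_real (fslice_norm n s n3 W k)"
  unfolding normalization_def fst_conv
  by (rule tfft_tifft[OF n _ k]) (intro symc_divide symc_tfft n symc_real fslice_norm_sym; simp)

lemma ipF_self: "ipF n s (tfft n3 W) (tfft n3 W) k = complex_of_real ((fslice_norm n s n3 W k)\<^sup>2)"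
proof -
  have "(fslice_norm n s n3 W k)\<^sup>2 = (\<Sum>i<n. \<Sum>j<s. (cmod (tfft n3 W i j k))\<^sup>2)"
    unfolding fslice_norm_def by (simp add: sum_nonneg)
  thus ?thesis unfolding ipF_def by (simp add: mult.commute[of "cnj _"] mult_cnj_sq)
qed



definition FSF :: "nat \<Rightarrow> nat \<Rightarrow> (nat \<Rightarrow> tensor) \<Rightarrow> (nat \<Rightarrow> nat \<Rightarrow> nat \<Rightarrow> complex) \<Rightarrow> bool" where
  "FSF n3 m R Y \<longleftrightarrow> (\<exists>c. (\<forall>l. symc n3 (c l)) \<and>
     (\<forall>a b k. k < n3 \<longrightarrow> Y a b k = (\<Sum>l=1..m. c l k * tfft n3 (R l) a b k)))"

lemma FSF_cong:
  "FSF n3 m R Y \<Longrightarrow> (\<And>a b k. k < n3 \<Longrightarrow> Y' a b k = Y a b k) \<Longrightarrow> FSF n3 m R Y'"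
  unfolding FSF_def by auto

lemma FSF_zero: "FSF n3 m R (\<lambda>a b k. 0)"
  unfolding FSF_def by (rule exI[of _ "\<lambda>l k. 0"]) (simp add: symc_zero)

lemma FSF_add:
  assumes "FSF n3 m R Y1" "FSF n3 m R Y2"
  shows "FSF n3 m R (\<lambda>a b k. Y1 a b k + Y2 a b k)"
proof -
  obtain c1 where c1: "\<forall>l. symc n3 (c1 l)" "\<forall>a b k. k < n3 \<longrightarrow> Y1 a b k = (\<Sum>l=1..m. c1 l k * tfft n3 (R l) a b k)"
    using assms(1) unfolding FSF_def by blast
  obtain c2 where c2: "\<forall>l. symc n3 (c2 l)" "\<forall>a b k. k < n3 \<longrightarrow> Y2 a b k = (\<Sum>l=1..m. c2 l k * tfft n3 (R l) a b k)"
    using assms(2) unfolding FSF_def by blast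
  show ?thesis unfolding FSF_def
  proof (rule exI[of _ "\<lambda>l k. c1 l k + c2 l k"], intro conjI allI impI)
    fix l show "symc n3 (\<lambda>k. c1 l k + c2 l k)" using c1 c2 by (simp add: symc_add)
  next
    fix a b k assume "k < n3"
    thus "Y1 a b k + Y2 a b k = (\<Sum>l=1..m. (c1 l k + c2 l k) * tfft n3 (R l) a b k)"
      using c1 c2 by (simp add: sum.distrib distrib_right)
  qed
qed

lemma FSF_scale:
  assumes "symc n3 f" "FSF n3 m R Y"
  shows "FSF n3 m R (\<lambda>a b k. f k * Y a b k)"
proof -
  obtain c where c: "\<forall>l. symc n3 (c l)" "\<forall>a b k. k < n3 \<longrightarrow> Y a b k = (\<Sum>l=1..m. c l k * tfft n3 (R l) a b k)"
    using assms(2) unfolding FSF_def by blast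
  show ?thesis unfolding FSF_def
  proof (rule exI[of _ "\<lambda>l k. f k * c l k"], intro conjI allI impI)
    fix l show "symc n3 (\<lambda>k. f k * c l k)" using c assms(1) by (simp add: symc_mult)
  next
    fix a b k assume "k < n3"
    thus "f k * Y a b k = (\<Sum>l=1..m. (f k * c l k) * tfft n3 (R l) a b k)"
      using c by (simp add: sum_distrib_left mult.assoc)
  qed
qed

lemma FSF_uminus: "FSF n3 m R Y \<Longrightarrow> FSF n3 m R (\<lambda>a b k. - Y a b k)"
  by (rule FSF_cong[OF FSF_scale[OF symc_const[of n3 "-1"]]]) simp_all

lemma FSF_diff:
  "FSF n3 m R Y1 \<Longrightarrow> FSF n3 m R Y2 \<Longrightarrow> FSF n3 m R (\<lambda>a b k. Y1 a b k - Y2 a b k)"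
  by (rule FSF_cong[OF FSF_add[OF _ FSF_uminus, of n3 m R Y1 Y2]]) simp_all

lemma FSF_sum:
  assumes "finite I" "\<And>x. x \<in> I \<Longrightarrow> FSF n3 m R (Y x)"
  shows "FSF n3 m R (\<lambda>a b k. \<Sum>x\<in>I. Y x a b k)"
  using assms
proof (induction I rule: finite_induct)
  case empty thus ?case by (simp add: FSF_zero)
next
  case (insert x F)
  have "FSF n3 m R (\<lambda>a b k. Y x a b k + (\<Sum>x\<in>F. Y x a b k))"
    by (rule FSF_add) (use insert in auto)
  thus ?case using insert by simp
qed

lemma FSF_mono:
  assumes "m \<le> m'" "FSF n3 m R Y"
  shows "FSF n3 m' R Y"
proof -
  obtain c where c: "\<forall>l. symc n3 (c l)" "\<forall>a b k. k < n3 \<longrightarrow> Y a b k = (\<Sum>l=1..m. c l k * tfft n3 (R l) a b k)"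
    using assms(2) unfolding FSF_def by blast
  have split: "{1..m'} = {1..m} \<union> {m<..m'}" using assms(1) by auto
  show ?thesis unfolding FSF_def
  proof (rule exI[of _ "\<lambda>l k. if l \<le> m then c l k else 0"], intro conjI allI impI)
    fix l show "symc n3 (\<lambda>k. if l \<le> m then c l k else 0)"
      by (rule symc_if) (use c in \<open>auto simp: symc_zero\<close>)
  next
    fix a b k assume k: "k < n3"
    have "(\<Sum>l=1..m'. (if l \<le> m then c l k else 0) * tfft n3 (R l) a b k)
        = (\<Sum>l=1..m. (if l \<le> m then c l k else 0) * tfft n3 (R l) a b k)
          + (\<Sum>l\<in>{m<..m'}. (if l \<le> m then c l k else 0) * tfft n3 (R l) a b k)"
      unfolding split by (rule sum.union_disjoint) auto
    also have "\<dots> = (\<Sum>l=1..m. c l k * tfft n3 (R l) a b k)" by simp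
    finally show "Y a b k = (\<Sum>l=1..m'. (if l \<le> m then c l k else 0) * tfft n3 (R l) a b k)"
      using c k by simp
  qed
qed

lemma FSF_basis:
  assumes "l \<in> {1..m}"
  shows "FSF n3 m R (tfft n3 (R l))"
  unfolding FSF_def
proof (rule exI[of _ "\<lambda>r k. if r = l then 1 else 0"], intro conjI allI impI)
  fix r show "symc n3 (\<lambda>k. if r = l then 1 else 0)" by (rule symc_if) (simp_all add: symc_one symc_zero)
next
  fix a b k
  have "(\<Sum>r=1..m. (if r = l then 1 else 0) * tfft n3 (R r) a b k) = (\<Sum>r=1..m. if r = l then tfft n3 (R r) a b k else 0)"
    by (rule sum.cong) auto
  also have "\<dots> = tfft n3 (R l) a b k" using assms by (simp add: sum.delta')
  finally show "tfft n3 (R l) a b k = (\<Sum>r=1..m. (if r = l then 1 else 0) * tfft n3 (R r) a b k)" by simp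
qed

lemma FSF_trans:
  assumes Q: "\<And>l. l \<in> {1..m} \<Longrightarrow> FSF n3 m' R' (tfft n3 (R l))" and Y: "FSF n3 m R Y"
  shows "FSF n3 m' R' Y"
proof -
  obtain c where c: "\<forall>l. symc n3 (c l)" "\<forall>a b k. k < n3 \<longrightarrow> Y a b k = (\<Sum>l=1..m. c l k * tfft n3 (R l) a b k)"
    using Y unfolding FSF_def by blast
  have "FSF n3 m' R' (\<lambda>a b k. \<Sum>l=1..m. c l k * tfft n3 (R l) a b k)"
    by (rule FSF_sum) (use c Q in \<open>auto intro: FSF_scale\<close>)
  thus ?thesis by (rule FSF_cong) (use c in auto)
qed

definition Amul :: "nat \<Rightarrow> nat \<Rightarrow> tensor \<Rightarrow> (nat \<Rightarrow> nat \<Rightarrow> nat \<Rightarrow> complex) \<Rightarrow> (nat \<Rightarrow> nat \<Rightarrow> nat \<Rightarrow> complex)" where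
  "Amul n n3 A Y = (\<lambda>a b k. \<Sum>q<n. tfft n3 A a q k * Y q b k)"

lemma FSF_shift:
  assumes Y: "FSF n3 j R Y" and Q: "\<And>r. r \<in> {1..j} \<Longrightarrow> FSF n3 m R' (Amul n n3 A (tfft n3 (R r)))"
  shows "FSF n3 m R' (Amul n n3 A Y)"
proof -
  obtain c where c: "\<forall>l. symc n3 (c l)" "\<forall>a b k. k < n3 \<longrightarrow> Y a b k = (\<Sum>l=1..j. c l k * tfft n3 (R l) a b k)"
    using Y unfolding FSF_def by blast
  have "FSF n3 m R' (\<lambda>a b k. \<Sum>l=1..j. c l k * Amul n n3 A (tfft n3 (R l)) a b k)"
    by (rule FSF_sum) (use c Q in \<open>auto intro: FSF_scale\<close>)
  thus ?thesis
  proof (rule FSF_cong)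
    fix a b k assume k: "k < n3"
    have "Amul n n3 A Y a b k = (\<Sum>q<n. tfft n3 A a q k * (\<Sum>l=1..j. c l k * tfft n3 (R l) q b k))"
      unfolding Amul_def using c k by simp
    also have "\<dots> = (\<Sum>l=1..j. c l k * Amul n n3 A (tfft n3 (R l)) a b k)"
      unfolding Amul_def sum_distrib_left by (subst sum.swap) (rule sum.cong[OF refl], rule sum.cong[OF refl], simp add: mult_ac)
    finally show "Amul n n3 A Y a b k = (\<Sum>l=1..j. c l k * Amul n n3 A (tfft n3 (R l)) a b k)" .
  qed
qed

lemma bridge:
  fixes R :: "nat \<Rightarrow> tensor" and m :: nat
  assumes n: "0 < n3"
  shows "{X. \<exists>b. (\<forall>j. is_tube n3 (b j)) \<and> X = (\<Sum>j=1..m. tube_mult n3 (b j) (R j))}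
       = {X. trunc3 n3 X \<and> FSF n3 m R (tfft n3 X)}"
proof (intro set_eqI iffI)
  fix X assume "X \<in> {X. \<exists>b. (\<forall>j. is_tube n3 (b j)) \<and> X = (\<Sum>j=1..m. tube_mult n3 (b j) (R j))}"
  then obtain b where b: "X = (\<Sum>j=1..m. tube_mult n3 (b j) (R j))" by blast
  have "trunc3 n3 (\<Sum>j=1..m. tube_mult n3 (b j) (R j))"
    by (rule trunc_sum) (simp add: tube_mult_def trunc_tifft)
  moreover have "FSF n3 m R (tfft n3 (\<Sum>j=1..m. tube_mult n3 (b j) (R j)))"
    unfolding FSF_def
  proof (rule exI[of _ "\<lambda>l. tube_fft n3 (b l)"], intro conjI allI impI)
    fix l show "symc n3 (tube_fft n3 (b l))" by (rule symc_tube_fft[OF n])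
  next
    fix a c k assume k: "k < n3"
    show "tfft n3 (\<Sum>j=1..m. tube_mult n3 (b j) (R j)) a c k = (\<Sum>l=1..m. tube_fft n3 (b l) k * tfft n3 (R l) a c k)"
      unfolding tfft_sum by (rule sum.cong[OF refl]) (rule tfft_tube_mult[OF n k])
  qed
  ultimately show "X \<in> {X. trunc3 n3 X \<and> FSF n3 m R (tfft n3 X)}" unfolding b by simp
next
  fix X assume "X \<in> {X. trunc3 n3 X \<and> FSF n3 m R (tfft n3 X)}"
  hence X: "trunc3 n3 X" "FSF n3 m R (tfft n3 X)" by auto
  obtain c where c: "\<forall>l. symc n3 (c l)" "\<forall>a b k. k < n3 \<longrightarrow> tfft n3 X a b k = (\<Sum>l=1..m. c l k * tfft n3 (R l) a b k)"
    using X(2) unfolding FSF_def by blast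
  have "X = (\<Sum>j=1..m. tube_mult n3 (tube_ifft n3 (c j)) (R j))"
  proof (rule tensor_eq[OF n X(1)])
    show "trunc3 n3 (\<Sum>j=1..m. tube_mult n3 (tube_ifft n3 (c j)) (R j))"
      by (rule trunc_sum) (simp add: tube_mult_def trunc_tifft)
  next
    fix a b k assume k: "k < n3"
    show "tfft n3 X a b k = tfft n3 (\<Sum>j=1..m. tube_mult n3 (tube_ifft n3 (c j)) (R j)) a b k"
      unfolding tfft_sum c(2)[rule_format, OF k]
      by (rule sum.cong[OF refl]) (simp only: tfft_tube_mult[OF n k] tube_fft_ifft[OF n c(1)[rule_format] k])
  qed
  thus "X \<in> {X. \<exists>b. (\<forall>j. is_tube n3 (b j)) \<and> X = (\<Sum>j=1..m. tube_mult n3 (b j) (R j))}"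
    using is_tube_ifft[of n3] by (intro CollectI exI[of _ "\<lambda>l. tube_ifft n3 (c l)"] conjI allI)
qed



lemma arn_len: "length (arnoldi n s n3 A V j) = Suc j"
  by (induction j) (simp_all add: Let_def)

lemma arn_nth: "i \<le> j \<Longrightarrow> arnoldi n s n3 A V j ! i = arnoldi_V n s n3 A V (Suc i)"
proof (induction j arbitrary: i)
  case 0 thus ?case by (simp add: arnoldi_V_def)
next
  case (Suc j)
  show ?case
  proof (cases "i \<le> j")
    case True thus ?thesis using Suc by (simp add: Let_def nth_append arn_len)
  next
    case False
    hence "i = Suc j" using Suc by simp
    thus ?thesis by (simp add: Let_def nth_append arn_len arnoldi_V_def)
  qed
qed

lemma mgs_cong: "(\<And>l. 1 \<le> l \<Longrightarrow> l \<le> i \<Longrightarrow> Vs l = Vs' l) \<Longrightarrow> mgs n s n3 Vs W i = mgs n s n3 Vs' W i"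
  by (induction i) (simp_all add: Let_def)

definition Wf :: "nat \<Rightarrow> nat \<Rightarrow> nat \<Rightarrow> tensor \<Rightarrow> tensor \<Rightarrow> nat \<Rightarrow> tensor" where
  "Wf n s n3 A V j = mgs n s n3 (arnoldi_V n s n3 A V) (tprod n n3 A (arnoldi_V n s n3 A V j)) j"

lemma arnW: "arnoldi_W n s n3 A (arnoldi n s n3 A V j) = Wf n s n3 A V (Suc j)"
proof -
  have "last (arnoldi n s n3 A V j) = arnoldi_V n s n3 A V (Suc j)" by (simp add: arnoldi_V_def)
  moreover have "mgs n s n3 (\<lambda>i. arnoldi n s n3 A V j ! (i - 1)) W (Suc j) = mgs n s n3 (arnoldi_V n s n3 A V) W (Suc j)" for W
    by (rule mgs_cong) (simp add: arn_nth)
  ultimately show ?thesis unfolding arnoldi_W_def Wf_def arn_len by simp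
qed

lemma V1: "arnoldi_V n s n3 A V (Suc 0) = fst (normalization n s n3 V)"
  by (simp add: arnoldi_V_def)

lemma VSuc: "1 \<le> j \<Longrightarrow> arnoldi_V n s n3 A V (Suc j) = fst (normalization n s n3 (Wf n s n3 A V j))"
  by (cases j) (simp_all add: arnoldi_V_def Let_def arnW)

lemma nbV: "no_breakdown n s n3 A V m \<Longrightarrow> \<not> breakdown n s n3 V"
  unfolding no_breakdown_def by simp

lemma nbW: "no_breakdown n s n3 A V m \<Longrightarrow> j \<in> {1..m} \<Longrightarrow> \<not> breakdown n s n3 (Wf n s n3 A V j)"
proof -
  assume nb: "no_breakdown n s n3 A V m" and j: "j \<in> {1..m}"
  hence "j - 1 < m" by auto
  hence "\<not> breakdown n s n3 (arnoldi_W n s n3 A (arnoldi n s n3 A V (j - 1)))"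
    using nb unfolding no_breakdown_def by blast
  moreover have "Suc (j - 1) = j" using j by auto
  ultimately show ?thesis using arnW[of n s n3 A V "j - 1"] by simp
qed

lemma ipF_cnj: "ipF n s Y X k = cnj (ipF n s X Y k)"
  unfolding ipF_def cnj_sum by (simp add: mult.commute)

lemma ipF_cong2: "(\<And>a b. Y a b k = Y' a b k) \<Longrightarrow> ipF n s X Y k = ipF n s X Y' k"
  unfolding ipF_def by simp

lemma ipF_add: "ipF n s X (\<lambda>a b k. Y a b k + Z a b k) k = ipF n s X Y k + ipF n s X Z k"
  unfolding ipF_def by (simp add: distrib_left sum.distrib)

lemma ipF_scale: "ipF n s X (\<lambda>a b k. c k * Y a b k) k = c k * ipF n s X Y k"
  unfolding ipF_def by (simp add: sum_distrib_left mult.left_commute)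

lemma ipF_zero: "ipF n s X (\<lambda>a b k. 0) k = 0"
  unfolding ipF_def by simp

lemma ipF_sum: "finite I \<Longrightarrow> ipF n s X (\<lambda>a b k. \<Sum>j\<in>I. Y j a b k) k = (\<Sum>j\<in>I. ipF n s X (Y j) k)"
proof (induction I rule: finite_induct)
  case empty thus ?case using ipF_zero by simp
next
  case (insert x F)
  have "ipF n s X (\<lambda>a b k. \<Sum>j\<in>insert x F. Y j a b k) k = ipF n s X (\<lambda>a b k. Y x a b k + (\<Sum>j\<in>F. Y j a b k)) k"
    using insert by simp
  also have "\<dots> = ipF n s X (Y x) k + ipF n s X (\<lambda>a b k. \<Sum>j\<in>F. Y j a b k) k" by (rule ipF_add)
  finally show ?case using insert by simp
qed

lemma ipF_lin: "ipF n s X (\<lambda>a b k. Y a b k - c k * Z a b k) k = ipF n s X Y k - c k * ipF n s X Z k"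
  unfolding ipF_def by (simp add: right_diff_distrib sum_subtractf sum_distrib_left mult.left_commute)

lemma ipF_div: "ipF n s X (\<lambda>a b k. Y a b k / d k) k = ipF n s X Y k / d k"
  unfolding ipF_def by (simp add: sum_divide_distrib)

context
  fixes n s n3 :: nat and W :: tensor and k :: nat
  assumes n3pos: "0 < n3" and kk: "k < n3" and nz: "fslice_norm n s n3 W k \<noteq> 0"
begin

lemma NQ1: "ipF n s X (tfft n3 (fst (normalization n s n3 W))) k = ipF n s X (tfft n3 W) k / complex_of_real (fslice_norm n s n3 W k)"
proof -
  have "ipF n s X (tfft n3 (fst (normalization n s n3 W))) k
      = ipF n s X (\<lambda>a b k. tfft n3 W a b k / complex_of_real (fslice_norm n s n3 W k)) k"
    by (rule ipF_cong2) (simp add: tfft_normalization[OF n3pos kk])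
  thus ?thesis by (simp only: ipF_div)
qed

lemma NQ2: "ipF n s (tfft n3 (fst (normalization n s n3 W))) (tfft n3 (fst (normalization n s n3 W))) k = 1"
proof -
  let ?Q = "tfft n3 (fst (normalization n s n3 W))"
  let ?nu = "complex_of_real (fslice_norm n s n3 W k)"
  have "ipF n s ?Q ?Q k = ipF n s ?Q (tfft n3 W) k / ?nu" by (rule NQ1)
  also have "ipF n s ?Q (tfft n3 W) k = cnj (ipF n s (tfft n3 W) ?Q k)" by (rule ipF_cnj)
  also have "ipF n s (tfft n3 W) ?Q k = ipF n s (tfft n3 W) (tfft n3 W) k / ?nu" by (rule NQ1)
  also have "ipF n s (tfft n3 W) (tfft n3 W) k = ?nu * ?nu" by (simp add: ipF_self power2_eq_square)
  finally show ?thesis using nz by simp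
qed

lemma NQ3: "tfft n3 W a b k = complex_of_real (fslice_norm n s n3 W k) * tfft n3 (fst (normalization n s n3 W)) a b k"
  using nz by (simp add: tfft_normalization[OF n3pos kk])

end

definition gco :: "nat \<Rightarrow> nat \<Rightarrow> nat \<Rightarrow> (nat \<Rightarrow> tensor) \<Rightarrow> tensor \<Rightarrow> nat \<Rightarrow> nat \<Rightarrow> complex" where
  "gco n s n3 Vs W l = tube_fft n3 (tinner n s n3 (Vs l) (mgs n s n3 Vs W (l - 1)))"

lemma M1:
  assumes n3pos: "0 < n3" and kk: "k < n3"
  shows "tfft n3 (mgs n s n3 Vs W i) a b k = tfft n3 W a b k - (\<Sum>l=1..i. gco n s n3 Vs W l k * tfft n3 (Vs l) a b k)"
proof (induction i)
  case 0 thus ?case by simp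
next
  case (Suc i)
  have "tfft n3 (mgs n s n3 Vs W (Suc i)) a b k = tfft n3 (mgs n s n3 Vs W i) a b k
     - tube_fft n3 (tinner n s n3 (Vs (Suc i)) (mgs n s n3 Vs W i)) k * tfft n3 (Vs (Suc i)) a b k"
    by (simp only: mgs.simps Let_def tfft_diff tfft_tube_mult[OF n3pos kk])
  thus ?case by (simp add: Suc gco_def)
qed

lemma M2:
  assumes n3pos: "0 < n3" and kk: "k < n3"
    and ON: "\<And>a b. a \<in> {1..i} \<Longrightarrow> b \<in> {1..i} \<Longrightarrow> ipF n s (tfft n3 (Vs a)) (tfft n3 (Vs b)) k = (if a = b then 1 else 0)"
    and a: "a \<in> {1..i}"
  shows "ipF n s (tfft n3 (Vs a)) (tfft n3 (mgs n s n3 Vs W i)) k = 0"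
  using ON a
proof (induction i arbitrary: a)
  case 0 thus ?case by simp
next
  case (Suc i)
  let ?M = "mgs n s n3 Vs W i"
  let ?h = "tube_fft n3 (tinner n s n3 (Vs (Suc i)) ?M)"
  have "ipF n s (tfft n3 (Vs a)) (tfft n3 (mgs n s n3 Vs W (Suc i))) k
      = ipF n s (tfft n3 (Vs a)) (\<lambda>a b k. tfft n3 ?M a b k - ?h k * tfft n3 (Vs (Suc i)) a b k) k"
    by (rule ipF_cong2) (simp only: mgs.simps Let_def tfft_diff tfft_tube_mult[OF n3pos kk])
  also have "\<dots> = ipF n s (tfft n3 (Vs a)) (tfft n3 ?M) k - ?h k * ipF n s (tfft n3 (Vs a)) (tfft n3 (Vs (Suc i))) k"
    by (rule ipF_lin)
  also have "\<dots> = 0"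
  proof (cases "a = Suc i")
    case True
    have "?h k = ipF n s (tfft n3 (Vs (Suc i))) (tfft n3 ?M) k" by (rule tube_fft_tinner[OF n3pos kk])
    moreover have "ipF n s (tfft n3 (Vs a)) (tfft n3 (Vs (Suc i))) k = 1" using Suc.prems True by simp
    ultimately show ?thesis using True by simp
  next
    case False
    hence a': "a \<in> {1..i}" using Suc.prems by auto
    have "ipF n s (tfft n3 (Vs a)) (tfft n3 ?M) k = 0"
      by (rule Suc.IH) (use Suc.prems a' in auto)
    moreover have "ipF n s (tfft n3 (Vs a)) (tfft n3 (Vs (Suc i))) k = 0" using Suc.prems False a' by simp
    ultimately show ?thesis by simp
  qed
  finally show ?case .
qed



definition Pk :: "nat \<Rightarrow> nat \<Rightarrow> tensor \<Rightarrow> tensor \<Rightarrow> nat \<Rightarrow> tensor" where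
  "Pk n n3 A V l = tprod n n3 (tpow n n3 A (l - 1)) V"

lemma symcinv: "0 < n3 \<Longrightarrow> symc n3 (\<lambda>k. 1 / complex_of_real (fslice_norm n s n3 W k))"
  by (intro symc_divide symc_one symc_real fslice_norm_sym)

lemma symcnu: "0 < n3 \<Longrightarrow> symc n3 (\<lambda>k. complex_of_real (fslice_norm n s n3 W k))"
  by (intro symc_real fslice_norm_sym)

lemma tinner_const:
  assumes n3pos: "0 < n3" and c: "\<And>k. k < n3 \<Longrightarrow> ipF n s (tfft n3 X) (tfft n3 Y) k = c"
  shows "tinner n s n3 X Y = tube_ifft n3 (\<lambda>k. c)"
proof -
  have "is_tube n3 (tinner n s n3 X Y)" unfolding tinner_def ttrace_def by (rule is_tube_ifft)
  hence "tinner n s n3 X Y = tube_ifft n3 (tube_fft n3 (tinner n s n3 X Y))" by (simp add: tube_ifft_fft n3pos)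
  also have "\<dots> = tube_ifft n3 (\<lambda>k. c)"
    by (rule tube_ifft_cong) (simp add: tube_fft_tinner[OF n3pos] c)
  finally show ?thesis .
qed

lemma e_eq: "0 < n3 \<Longrightarrow> tube_ifft n3 (\<lambda>k. 1) = tube_e"
proof -
  assume n3pos: "0 < n3"
  have "is_tube n3 tube_e" using n3pos unfolding is_tube_def tube_e_def by simp
  hence "tube_e = tube_ifft n3 (tube_fft n3 tube_e)" by (simp add: tube_ifft_fft n3pos)
  also have "\<dots> = tube_ifft n3 (\<lambda>k. 1)" by (rule tube_ifft_cong) (simp add: tube_fft_e n3pos)
  finally show ?thesis by simp
qed

lemma o_eq: "tube_ifft n3 (\<lambda>k. 0) = tube_o"
  unfolding tube_ifft_def tube_o_def by (rule ext) simp

context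
  fixes n s n3 m :: nat and A V :: tensor
  assumes n3pos: "0 < n3" and Vt: "is_tensor n s n3 V" and nb: "no_breakdown n s n3 A V m"
begin

abbreviation "Vf \<equiv> arnoldi_V n s n3 A V"

definition "Qsrc j = (if j = 0 then V else Wf n s n3 A V j)"

lemma VS: "Vf (Suc j) = fst (normalization n s n3 (Qsrc j))"
  unfolding Qsrc_def by (cases "j = 0") (simp_all add: V1 VSuc)

lemma nzQ: "Suc j \<le> m \<Longrightarrow> k < n3 \<Longrightarrow> fslice_norm n s n3 (Qsrc j) k \<noteq> 0"
proof (cases "j = 0")
  case True
  thus "k < n3 \<Longrightarrow> fslice_norm n s n3 (Qsrc j) k \<noteq> 0"
    using nbV[OF nb] unfolding Qsrc_def breakdown_def by auto
next
  case False
  assume "Suc j \<le> m" "k < n3"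
  hence "j \<in> {1..m}" using False by auto
  thus ?thesis using nbW[OF nb] \<open>k < n3\<close> False unfolding Qsrc_def breakdown_def by auto
qed

lemma ON:
  "j \<le> m \<Longrightarrow> a \<in> {1..j} \<Longrightarrow> b \<in> {1..j} \<Longrightarrow> k < n3 \<Longrightarrow>
     ipF n s (tfft n3 (Vf a)) (tfft n3 (Vf b)) k = (if a = b then 1 else 0)"
proof (induction j arbitrary: a b)
  case 0 thus ?case by simp
next
  case (Suc j)
  have jm: "j \<le> m" using Suc by simp
  have self: "ipF n s (tfft n3 (Vf (Suc j))) (tfft n3 (Vf (Suc j))) k = 1"
    unfolding VS by (rule NQ2[OF n3pos Suc.prems(4) nzQ[OF Suc.prems(1,4)]])
  have orth: "ipF n s (tfft n3 (Vf a')) (tfft n3 (Vf (Suc j))) k = 0" if a': "a' \<in> {1..j}" for a'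
  proof -
    have j1: "j \<noteq> 0" using a' by auto
    have "ipF n s (tfft n3 (Vf a')) (tfft n3 (Vf (Suc j))) k
        = ipF n s (tfft n3 (Vf a')) (tfft n3 (Qsrc j)) k / complex_of_real (fslice_norm n s n3 (Qsrc j) k)"
      unfolding VS by (rule NQ1[OF n3pos Suc.prems(4) nzQ[OF Suc.prems(1,4)]])
    also have "ipF n s (tfft n3 (Vf a')) (tfft n3 (Qsrc j)) k = 0"
      unfolding Qsrc_def Wf_def using j1
      by (simp, intro M2[OF n3pos Suc.prems(4) _ a']) (use Suc.IH[OF jm _ _ Suc.prems(4)] in simp)
    finally show ?thesis by simp
  qed
  show ?case
  proof (cases "a = Suc j")
    case True
    show ?thesis
    proof (cases "b = Suc j")
      case True thus ?thesis using \<open>a = Suc j\<close> self by simp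
    next
      case False
      hence b': "b \<in> {1..j}" using Suc.prems by auto
      have "ipF n s (tfft n3 (Vf a)) (tfft n3 (Vf b)) k = cnj (ipF n s (tfft n3 (Vf b)) (tfft n3 (Vf a)) k)"
        by (rule ipF_cnj)
      thus ?thesis using orth[OF b'] True False by simp
    qed
  next
    case False
    hence a': "a \<in> {1..j}" using Suc.prems by auto
    show ?thesis
    proof (cases "b = Suc j")
      case True thus ?thesis using orth[OF a'] False by simp
    next
      case False
      hence b': "b \<in> {1..j}" using Suc.prems by auto
      show ?thesis by (rule Suc.IH[OF jm a' b' Suc.prems(4)])
    qed
  qed
qed

lemma T_ortho: "T_orthonormal n s n3 m Vf"
  unfolding T_orthonormal_def
proof (intro ballI)
  fix i j assume i: "i \<in> {1..m}" and j: "j \<in> {1..m}"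
  have "tinner n s n3 (Vf i) (Vf j) = tube_ifft n3 (\<lambda>k. if i = j then 1 else 0)"
    by (rule tinner_const[OF n3pos]) (rule ON[OF order_refl i j])
  thus "tinner n s n3 (Vf i) (Vf j) = (if i = j then tube_e else tube_o)"
    by (simp add: e_eq[OF n3pos] o_eq)
qed

lemma T_indep: "T_independent n3 m Vf"
  unfolding T_independent_def
proof (intro allI impI ballI)
  fix b :: "nat \<Rightarrow> tube" and a
  assume bt: "\<forall>j. is_tube n3 (b j)" and S: "(\<Sum>j=1..m. tube_mult n3 (b j) (Vf j)) = 0" and a: "a \<in> {1..m}"
  have fz: "tube_fft n3 (b a) k = 0" if k: "k < n3" for k
  proof -
    have "0 = ipF n s (tfft n3 (Vf a)) (tfft n3 (\<Sum>j=1..m. tube_mult n3 (b j) (Vf j))) k"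
      unfolding S by (simp add: tfft_zero ipF_def)
    also have "\<dots> = ipF n s (tfft n3 (Vf a)) (\<lambda>a' b' k. \<Sum>j=1..m. tube_fft n3 (b j) k * tfft n3 (Vf j) a' b' k) k"
      by (rule ipF_cong2) (simp add: tfft_sum tfft_tube_mult[OF n3pos k])
    also have "\<dots> = (\<Sum>j=1..m. tube_fft n3 (b j) k * ipF n s (tfft n3 (Vf a)) (tfft n3 (Vf j)) k)"
      by (simp add: ipF_sum ipF_scale)
    also have "\<dots> = (\<Sum>j=1..m. if j = a then tube_fft n3 (b a) k else 0)"
      by (rule sum.cong[OF refl]) (simp add: ON[OF order_refl a _ k])
    also have "\<dots> = tube_fft n3 (b a) k" using a by (simp add: sum.delta')
    finally show ?thesis by simp
  qed
  have "b a = tube_ifft n3 (tube_fft n3 (b a))" using bt by (simp add: tube_ifft_fft n3pos)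
  also have "\<dots> = tube_ifft n3 (\<lambda>k. 0)" by (rule tube_ifft_cong) (simp add: fz)
  finally show "b a = tube_o" by (simp add: o_eq)
qed

end



lemma PA:
  assumes n3pos: "0 < n3" and kk: "k < n3" and r: "1 \<le> r"
  shows "tfft n3 (Pk n n3 A V (Suc r)) a b k = Amul n n3 A (tfft n3 (Pk n n3 A V r)) a b k"
proof -
  obtain r' where r': "r = Suc r'" using r by (cases r) auto
  let ?T = "tpow n n3 A r'"
  have "tfft n3 (Pk n n3 A V (Suc r)) a b k = (\<Sum>p<n. (\<Sum>q<n. tfft n3 A a q k * tfft n3 ?T q p k) * tfft n3 V p b k)"
    unfolding Pk_def r' by (simp add: tfft_tprod[OF n3pos kk])
  also have "\<dots> = (\<Sum>p<n. \<Sum>q<n. tfft n3 A a q k * (tfft n3 ?T q p k * tfft n3 V p b k))"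
    by (simp add: sum_distrib_right mult.assoc)
  also have "\<dots> = (\<Sum>q<n. \<Sum>p<n. tfft n3 A a q k * (tfft n3 ?T q p k * tfft n3 V p b k))"
    by (rule sum.swap)
  also have "\<dots> = Amul n n3 A (tfft n3 (Pk n n3 A V r)) a b k"
    unfolding Amul_def Pk_def r' by (simp add: tfft_tprod[OF n3pos kk] sum_distrib_left)
  finally show ?thesis .
qed

lemma P1:
  assumes n3pos: "0 < n3" and kk: "k < n3" and Vt: "is_tensor n s n3 V"
  shows "tfft n3 (Pk n n3 A V 1) a b k = tfft n3 V a b k"
proof (cases "a < n")
  case True
  have "tfft n3 (Pk n n3 A V 1) a b k = (\<Sum>p<n. (if a = p \<and> a < n then 1 else 0) * tfft n3 V p b k)"
    unfolding Pk_def by (simp add: tfft_tprod[OF n3pos kk] tfft_tident[OF n3pos])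
  also have "\<dots> = (\<Sum>p<n. if p = a then tfft n3 V p b k else 0)"
    by (rule sum.cong) (use True in auto)
  also have "\<dots> = tfft n3 V a b k" using True by (simp add: sum.delta')
  finally show ?thesis .
next
  case False
  have "tfft n3 (Pk n n3 A V 1) a b k = (\<Sum>p<n. (if a = p \<and> a < n then 1 else 0) * tfft n3 V p b k)"
    unfolding Pk_def by (simp add: tfft_tprod[OF n3pos kk] tfft_tident[OF n3pos])
  also have "\<dots> = 0" using False by simp
  also have "\<dots> = tfft n3 V a b k"
    using Vt False unfolding is_tensor_def tfft_def by simp
  finally show ?thesis .
qed

context
  fixes n s n3 m :: nat and A V :: tensor
  assumes n3pos: "0 < n3" and Vt: "is_tensor n s n3 V" and nb: "no_breakdown n s n3 A V m"
begin

lemma AmulV: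
  assumes r: "r \<in> {1..m}" and kk: "k < n3"
  shows "Amul n n3 A (tfft n3 (arnoldi_V n s n3 A V r)) a b k =
    complex_of_real (fslice_norm n s n3 (Wf n s n3 A V r) k) * tfft n3 (arnoldi_V n s n3 A V (Suc r)) a b k
    + (\<Sum>l=1..r. gco n s n3 (arnoldi_V n s n3 A V) (tprod n n3 A (arnoldi_V n s n3 A V r)) l k * tfft n3 (arnoldi_V n s n3 A V l) a b k)"
proof -
  have r1: "1 \<le> r" using r by simp
  have nz: "fslice_norm n s n3 (Wf n s n3 A V r) k \<noteq> 0" using nbW[OF nb r] kk unfolding breakdown_def by auto
  have "Amul n n3 A (tfft n3 (arnoldi_V n s n3 A V r)) a b k = tfft n3 (tprod n n3 A (arnoldi_V n s n3 A V r)) a b k"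
    unfolding Amul_def by (simp add: tfft_tprod[OF n3pos kk])
  also have "\<dots> = tfft n3 (Wf n s n3 A V r) a b k
     + (\<Sum>l=1..r. gco n s n3 (arnoldi_V n s n3 A V) (tprod n n3 A (arnoldi_V n s n3 A V r)) l k * tfft n3 (arnoldi_V n s n3 A V l) a b k)"
    unfolding Wf_def M1[OF n3pos kk] by simp
  also have "tfft n3 (Wf n s n3 A V r) a b k = complex_of_real (fslice_norm n s n3 (Wf n s n3 A V r) k) * tfft n3 (arnoldi_V n s n3 A V (Suc r)) a b k"
    unfolding VSuc[OF r1] by (rule NQ3[OF n3pos kk nz])
  finally show ?thesis .
qed

lemma VinP: "j \<le> m \<Longrightarrow> i \<in> {1..j} \<Longrightarrow> FSF n3 i (Pk n n3 A V) (tfft n3 (arnoldi_V n s n3 A V i))"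
proof (induction j arbitrary: i)
  case 0 thus ?case by simp
next
  case (Suc j)
  have jm: "j \<le> m" using Suc by simp
  show ?case
  proof (cases "i \<le> j")
    case True thus ?thesis using Suc by auto
  next
    case False
    hence i: "i = Suc j" using Suc by auto
    show ?thesis
    proof (cases "j = 0")
      case True
      have nz: "fslice_norm n s n3 V k \<noteq> 0" if "k < n3" for k
        using nbV[OF nb] that unfolding breakdown_def by auto
      have "FSF n3 (Suc 0) (Pk n n3 A V) (\<lambda>a b k. 1 / complex_of_real (fslice_norm n s n3 V k) * tfft n3 (Pk n n3 A V (Suc 0)) a b k)"
        by (rule FSF_scale[OF symcinv[OF n3pos] FSF_basis]) simp
      thus ?thesis unfolding i True
        by (rule FSF_cong) (simp add: V1 tfft_normalization[OF n3pos] P1[OF n3pos _ Vt, unfolded One_nat_def])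
    next
      case False
      hence j1: "1 \<le> j" by simp
      have A1: "FSF n3 (Suc j) (Pk n n3 A V) (Amul n n3 A (tfft n3 (arnoldi_V n s n3 A V j)))"
      proof (rule FSF_shift)
        show "FSF n3 j (Pk n n3 A V) (tfft n3 (arnoldi_V n s n3 A V j))" using Suc.IH[OF jm] j1 by simp
      next
        fix r assume r: "r \<in> {1..j}"
        have "FSF n3 (Suc j) (Pk n n3 A V) (tfft n3 (Pk n n3 A V (Suc r)))"
          by (rule FSF_basis) (use r in simp)
        thus "FSF n3 (Suc j) (Pk n n3 A V) (Amul n n3 A (tfft n3 (Pk n n3 A V r)))"
          by (rule FSF_cong) (use r in \<open>simp add: PA[OF n3pos]\<close>)
      qed
      have A2: "FSF n3 (Suc j) (Pk n n3 A V) (\<lambda>a b k. \<Sum>l=1..j. gco n s n3 (arnoldi_V n s n3 A V) (tprod n n3 A (arnoldi_V n s n3 A V j)) l k * tfft n3 (arnoldi_V n s n3 A V l) a b k)"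
      proof (rule FSF_sum)
        fix l assume l: "l \<in> {1..j}"
        show "FSF n3 (Suc j) (Pk n n3 A V) (\<lambda>a b k. gco n s n3 (arnoldi_V n s n3 A V) (tprod n n3 A (arnoldi_V n s n3 A V j)) l k * tfft n3 (arnoldi_V n s n3 A V l) a b k)"
          unfolding gco_def
          by (rule FSF_scale[OF symc_tube_fft[OF n3pos] FSF_mono[OF _ Suc.IH[OF jm l]]]) (use l in simp)
      qed (simp)
      have "FSF n3 (Suc j) (Pk n n3 A V) (\<lambda>a b k. 1 / complex_of_real (fslice_norm n s n3 (Wf n s n3 A V j) k) *
          (Amul n n3 A (tfft n3 (arnoldi_V n s n3 A V j)) a b k -
           (\<Sum>l=1..j. gco n s n3 (arnoldi_V n s n3 A V) (tprod n n3 A (arnoldi_V n s n3 A V j)) l k * tfft n3 (arnoldi_V n s n3 A V l) a b k)))"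
        by (rule FSF_scale[OF symcinv[OF n3pos] FSF_diff[OF A1 A2]])
      thus ?thesis unfolding i
      proof (rule FSF_cong)
        fix a b k assume kk: "k < n3"
        have "tfft n3 (tprod n n3 A (arnoldi_V n s n3 A V j)) a b k = Amul n n3 A (tfft n3 (arnoldi_V n s n3 A V j)) a b k"
          unfolding Amul_def by (simp add: tfft_tprod[OF n3pos kk])
        thus "tfft n3 (arnoldi_V n s n3 A V (Suc j)) a b k = 1 / complex_of_real (fslice_norm n s n3 (Wf n s n3 A V j) k) *
          (Amul n n3 A (tfft n3 (arnoldi_V n s n3 A V j)) a b k -
           (\<Sum>l=1..j. gco n s n3 (arnoldi_V n s n3 A V) (tprod n n3 A (arnoldi_V n s n3 A V j)) l k * tfft n3 (arnoldi_V n s n3 A V l) a b k))"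
          unfolding VSuc[OF j1] tfft_normalization[OF n3pos kk]
          by (simp add: Wf_def M1[OF n3pos kk])
      qed
    qed
  qed
qed

lemma PinV: "j \<le> m \<Longrightarrow> i \<in> {1..j} \<Longrightarrow> FSF n3 i (arnoldi_V n s n3 A V) (tfft n3 (Pk n n3 A V i))"
proof (induction j arbitrary: i)
  case 0 thus ?case by simp
next
  case (Suc j)
  have jm: "j \<le> m" using Suc by simp
  show ?case
  proof (cases "i \<le> j")
    case True thus ?thesis using Suc by auto
  next
    case False
    hence i: "i = Suc j" using Suc by auto
    show ?thesis
    proof (cases "j = 0")
      case True
      have nz: "fslice_norm n s n3 V k \<noteq> 0" if "k < n3" for k
        using nbV[OF nb] that unfolding breakdown_def by auto
      have "FSF n3 (Suc 0) (arnoldi_V n s n3 A V) (\<lambda>a b k. complex_of_real (fslice_norm n s n3 V k) * tfft n3 (arnoldi_V n s n3 A V (Suc 0)) a b k)"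
        by (rule FSF_scale[OF symcnu[OF n3pos] FSF_basis]) simp
      thus ?thesis unfolding i True
      proof (rule FSF_cong)
        fix a b k assume kk: "k < n3"
        show "tfft n3 (Pk n n3 A V (Suc 0)) a b k = complex_of_real (fslice_norm n s n3 V k) * tfft n3 (arnoldi_V n s n3 A V (Suc 0)) a b k"
          using P1[OF n3pos kk Vt, of A a b] NQ3[OF n3pos kk nz[OF kk], of a b] by (simp add: V1 One_nat_def)
      qed
    next
      case False
      hence j1: "1 \<le> j" by simp
      have "FSF n3 (Suc j) (arnoldi_V n s n3 A V) (Amul n n3 A (tfft n3 (Pk n n3 A V j)))"
      proof (rule FSF_shift)
        show "FSF n3 j (arnoldi_V n s n3 A V) (tfft n3 (Pk n n3 A V j))" using Suc.IH[OF jm] j1 by simp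
      next
        fix r assume r: "r \<in> {1..j}"
        have rm: "r \<in> {1..m}" using r jm by auto
        have B1: "FSF n3 (Suc j) (arnoldi_V n s n3 A V) (\<lambda>a b k. complex_of_real (fslice_norm n s n3 (Wf n s n3 A V r) k) * tfft n3 (arnoldi_V n s n3 A V (Suc r)) a b k)"
          by (rule FSF_scale[OF symcnu[OF n3pos] FSF_basis]) (use r in simp)
        have B2: "FSF n3 (Suc j) (arnoldi_V n s n3 A V) (\<lambda>a b k. \<Sum>l=1..r. gco n s n3 (arnoldi_V n s n3 A V) (tprod n n3 A (arnoldi_V n s n3 A V r)) l k * tfft n3 (arnoldi_V n s n3 A V l) a b k)"
        proof (rule FSF_sum)
          fix l assume l: "l \<in> {1..r}"
          show "FSF n3 (Suc j) (arnoldi_V n s n3 A V) (\<lambda>a b k. gco n s n3 (arnoldi_V n s n3 A V) (tprod n n3 A (arnoldi_V n s n3 A V r)) l k * tfft n3 (arnoldi_V n s n3 A V l) a b k)"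
            unfolding gco_def
            by (rule FSF_scale[OF symc_tube_fft[OF n3pos] FSF_basis]) (use l r in simp)
        qed (simp)
        show "FSF n3 (Suc j) (arnoldi_V n s n3 A V) (Amul n n3 A (tfft n3 (arnoldi_V n s n3 A V r)))"
          by (rule FSF_cong[OF FSF_add[OF B1 B2]]) (simp add: AmulV[OF rm])
      qed
      thus ?thesis unfolding i
        by (rule FSF_cong) (use j1 in \<open>simp add: PA[OF n3pos]\<close>)
    qed
  qed
qed

end



lemma trunc_norm: "trunc3 n3 (fst (normalization n s n3 W))"
  by (simp add: normalization_def trunc_tifft)

theorem proposition6:
  fixes n s n3 m :: nat and A V :: tensor
  assumes "0 < n3"
    and "is_tensor n n n3 A"
    and "is_tensor n s n3 V"
    and "no_breakdown n s n3 A V m"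
  shows "T_orthonormal_basis n s n3 m (arnoldi_V n s n3 A V) (tgKrylov n s n3 m A V)"
proof -
  note n3pos = assms(1) and Vt = assms(3) and nb = assms(4)
  have K: "tgKrylov n s n3 m A V = {X. trunc3 n3 X \<and> FSF n3 m (Pk n n3 A V) (tfft n3 X)}"
    using bridge[OF n3pos, where R="Pk n n3 A V" and m=m] unfolding tgKrylov_def by (simp only: Pk_def)
  have S: "tspan n3 m (arnoldi_V n s n3 A V) = {X. trunc3 n3 X \<and> FSF n3 m (arnoldi_V n s n3 A V) (tfft n3 X)}"
    unfolding tspan_def by (rule bridge[OF n3pos])
  have VP: "FSF n3 m (Pk n n3 A V) (tfft n3 (arnoldi_V n s n3 A V l))" if l: "l \<in> {1..m}" for l
    by (rule FSF_mono[OF _ VinP[OF n3pos Vt nb order_refl l]]) (use l in simp)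
  have PV: "FSF n3 m (arnoldi_V n s n3 A V) (tfft n3 (Pk n n3 A V l))" if l: "l \<in> {1..m}" for l
    by (rule FSF_mono[OF _ PinV[OF n3pos Vt nb order_refl l]]) (use l in simp)
  have eq: "tspan n3 m (arnoldi_V n s n3 A V) = tgKrylov n s n3 m A V"
  proof -
    have t1: "FSF n3 m (Pk n n3 A V) Y" if "FSF n3 m (arnoldi_V n s n3 A V) Y" for Y
      apply (rule FSF_trans[where R="arnoldi_V n s n3 A V" and m=m])
       apply (erule VP)
      apply (rule that)
      done
    have t2: "FSF n3 m (arnoldi_V n s n3 A V) Y" if "FSF n3 m (Pk n n3 A V) Y" for Y
      apply (rule FSF_trans[where R="Pk n n3 A V" and m=m])
       apply (erule PV)
      apply (rule that)
      done
    show ?thesis unfolding S K using t1 t2 by blast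
  qed
  have mem: "arnoldi_V n s n3 A V j \<in> tgKrylov n s n3 m A V" if j: "j \<in> {1..m}" for j
  proof -
    obtain j' where j': "j = Suc j'" using j by (cases j) auto
    have "trunc3 n3 (arnoldi_V n s n3 A V j)"
      unfolding j' by (cases "j' = 0") (simp_all add: V1 VSuc trunc_norm)
    thus ?thesis unfolding K using VP[OF j] by simp
  qed
  show ?thesis
    unfolding T_orthonormal_basis_def
    using T_ortho[OF n3pos Vt nb] T_indep[OF n3pos Vt nb] mem eq by blast
qed

end
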